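(* For each integer $t\ge0$ and each even integer $n\ge4$, there exists a binary even-like Euclidean self-orthogonal $[2^{t+1}n,\,n+t,\,2^{t+2}]_2$ code.
   Context: A binary code is even-like if every codeword has even Hamming weight. A code $\mathcal{C}$ is Euclidean self-orthogonal if $\mathcal{C}\subseteq\mathcal{C}^{\perp_E}$, where $\perp_E$ is the dual under $\sum_ix_iy_i$. *)

theory Defs
  imports Main "HOL-Library.Z2"
begin

definition words :: "nat \<Rightarrow> bit list set" where
  "words N = {x. length x = N}"

definition zero_word :: "nat \<Rightarrow> bit list" where
  "zero_word N = replicate N 0"

definition word_add :: "bit list \<Rightarrow> bit list \<Rightarrow> bit list" where
  "word_add x y = map2 (+) x y"

definition word_smult :: "bit \<Rightarrow> bit list \<Rightarrow> bit list" where
  "word_smult a x = map ((*) a) x"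

definition lincomb :: "nat \<Rightarrow> (nat \<Rightarrow> bit) \<Rightarrow> bit list list \<Rightarrow> bit list" where
  "lincomb N c vs = foldr word_add (map (\<lambda>i. word_smult (c i) (vs ! i)) [0..<length vs]) (zero_word N)"

definition lin_indep :: "nat \<Rightarrow> bit list list \<Rightarrow> bool" where
  "lin_indep N vs \<longleftrightarrow> (\<forall>c. lincomb N c vs = zero_word N \<longrightarrow> (\<forall>i<length vs. c i = 0))"

definition binary_linear_code :: "nat \<Rightarrow> nat \<Rightarrow> bit list set \<Rightarrow> bool" where
  "binary_linear_code N k C \<longleftrightarrow>
     (\<exists>vs. length vs = k \<and> set vs \<subseteq> words N \<and> lin_indep N vs \<and>
           C = {lincomb N c vs | c. True})"

definition hamming_weight :: "bit list \<Rightarrow> nat" where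
  "hamming_weight x = card {i. i < length x \<and> x ! i \<noteq> 0}"

definition hamming_dist :: "bit list \<Rightarrow> bit list \<Rightarrow> nat" where
  "hamming_dist x y = card {i. i < length x \<and> x ! i \<noteq> y ! i}"

definition min_distance :: "bit list set \<Rightarrow> nat" where
  "min_distance C = Min {hamming_dist x y | x y. x \<in> C \<and> y \<in> C \<and> x \<noteq> y}"

definition even_like :: "bit list set \<Rightarrow> bool" where
  "even_like C \<longleftrightarrow> (\<forall>x\<in>C. even (hamming_weight x))"

definition euclid_inner :: "bit list \<Rightarrow> bit list \<Rightarrow> bit" where
  "euclid_inner x y = (\<Sum>i<length x. x ! i * y ! i)"

definition euclid_dual :: "nat \<Rightarrow> bit list set \<Rightarrow> bit list set" where
  "euclid_dual N C = {y \<in> words N. \<forall>x\<in>C. euclid_inner x y = 0}"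

definition euclid_self_orthogonal :: "nat \<Rightarrow> bit list set \<Rightarrow> bool" where
  "euclid_self_orthogonal N C \<longleftrightarrow> C \<subseteq> euclid_dual N C"

end

theory Submission
  imports Defs
begin
unbundle bit_operations_syntax
declare add_bit_eq_xor[simp del] mult_bit_eq_and[simp del]

lemma foldr_gen:
  assumes "\<forall>k\<in>set xs. length (h k) = N"
  shows "foldr word_add (map h xs) (zero_word N) = map (\<lambda>p. \<Sum>k\<leftarrow>xs. h k ! p) [0..<N]"
  using assms
proof (induction xs)
  case Nil
  then show ?case by (simp add: zero_word_def map_replicate_const)
next
  case (Cons a xs)
  then show ?case
    by (auto simp: word_add_def intro!: nth_equalityI)
qed

lemma lincomb_eq:
  assumes "\<forall>v\<in>set vs. length v = N"
  shows "lincomb N c vs = map (\<lambda>p. \<Sum>k<length vs. c k * vs!k!p) [0..<N]"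
proof -
  have "lincomb N c vs = map (\<lambda>p. \<Sum>k\<leftarrow>[0..<length vs]. word_smult (c k) (vs ! k) ! p) [0..<N]"
    unfolding lincomb_def map_map[symmetric]
    by (rule foldr_gen) (use assms in \<open>auto simp: word_smult_def\<close>)
  also have "\<dots> = map (\<lambda>p. \<Sum>k<length vs. c k * vs!k!p) [0..<N]"
    using assms by (auto simp: word_smult_def sum_list_distinct_conv_sum_set atLeast0LessThan intro!: sum.cong)
  finally show ?thesis .
qed

lemma of_nat_bit: "(of_nat k :: bit) = (if even k then 0 else 1)"
  by (induction k) auto

definition gen :: "nat \<Rightarrow> nat \<Rightarrow> nat \<Rightarrow> nat \<Rightarrow> bit" where
  "gen n t k p = (if k < n - 1 then of_bool (p div 2^(t+1) = k \<or> p div 2^(t+1) = n - 1)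
                  else of_bool (bit (p mod 2^(t+1)) (k - (n - 1))))"

definition GG :: "nat \<Rightarrow> nat \<Rightarrow> (nat \<Rightarrow> bit) \<Rightarrow> nat \<Rightarrow> bit" where
  "GG n t c p = (\<Sum>k<n+t. c k * gen n t k p)"

definition Aa :: "nat \<Rightarrow> (nat \<Rightarrow> bit) \<Rightarrow> nat \<Rightarrow> bit" where
  "Aa n c j = (if j < n - 1 then c j else (\<Sum>k<n-1. c k))"

definition Uu :: "nat \<Rightarrow> nat \<Rightarrow> (nat \<Rightarrow> bit) \<Rightarrow> nat \<Rightarrow> bit" where
  "Uu n t c x = (\<Sum>k\<in>{n-1..<n+t}. c k * of_bool (bit x (k - (n - 1))))"

lemma GG_split:
  assumes "p div 2^(t+1) < n"
  shows "GG n t c p = Aa n c (p div 2^(t+1)) + Uu n t c (p mod 2^(t+1))"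
proof -
  define j where "j = p div 2^(t+1)"
  have n1: "n \<ge> 1" using assms by simp
  have U: "{..<n+t} = {..<n-1} \<union> {n-1..<n+t}" using n1 by auto
  have "GG n t c p = (\<Sum>k<n-1. c k * gen n t k p) + (\<Sum>k\<in>{n-1..<n+t}. c k * gen n t k p)"
    unfolding GG_def U by (rule sum.union_disjoint) auto
  moreover have "(\<Sum>k\<in>{n-1..<n+t}. c k * gen n t k p) = Uu n t c (p mod 2^(t+1))"
    unfolding Uu_def gen_def by (rule sum.cong) auto
  moreover have "(\<Sum>k<n-1. c k * gen n t k p) = Aa n c j"
  proof (cases "j < n - 1")
    case True
    then have "(\<Sum>k<n-1. c k * gen n t k p) = (\<Sum>k<n-1. if k = j then c k else 0)"
      by (intro sum.cong) (auto simp: gen_def j_def)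
    then show ?thesis using True by (simp add: Aa_def)
  next
    case False
    then have "j = n - 1" using assms j_def by simp
    then have "(\<Sum>k<n-1. c k * gen n t k p) = (\<Sum>k<n-1. c k)"
      by (intro sum.cong) (auto simp: gen_def j_def)
    then show ?thesis using False by (simp add: Aa_def)
  qed
  ultimately show ?thesis by (simp add: j_def)
qed

lemma GG_add: "GG n t (\<lambda>k. c k + d k) p = GG n t c p + GG n t d p"
  by (simp add: GG_def distrib_right sum.distrib)

lemma Aa_sum: "n \<ge> 1 \<Longrightarrow> (\<Sum>j<n. Aa n c j) = 0"
proof -
  assume n1: "n \<ge> 1"
  have "{..<n} = insert (n-1) {..<n-1}" using n1 by auto
  then have "(\<Sum>j<n. Aa n c j) = Aa n c (n-1) + (\<Sum>j<n-1. Aa n c j)" by simp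
  also have "(\<Sum>j<n-1. Aa n c j) = (\<Sum>j<n-1. c j)" by (rule sum.cong) (auto simp: Aa_def)
  also have "Aa n c (n-1) = (\<Sum>j<n-1. c j)" by (simp add: Aa_def)
  finally show ?thesis by simp
qed

lemma xor_lt:
  fixes x :: nat
  assumes "x < 2^(t+1)" "i < t+1"
  shows "x XOR 2^i < 2^(t+1)"
proof -
  have "take_bit (t+1) x = x" using assms by (simp add: take_bit_nat_eq_self_iff)
  moreover have "take_bit (t+1) (2^i::nat) = 2^i" using assms by (simp add: take_bit_nat_eq_self_iff)
  ultimately have "take_bit (t+1) (x XOR 2^i) = x XOR 2^i" by (metis take_bit_xor)
  then show ?thesis by (metis take_bit_nat_less_exp)
qed

lemma of_bool_neq_bit: "(of_bool (a \<noteq> b) :: bit) = of_bool a + of_bool b"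
  by (cases a; cases b) auto

lemma Uu_flip:
  assumes "i0 < t+1" "c (n - 1 + i0) = 1" "n \<ge> 1"
  shows "Uu n t c (x XOR 2^i0) = Uu n t c x + 1"
proof -
  define k0 where "k0 = n - 1 + i0"
  have k0: "k0 \<in> {n-1..<n+t}" using assms by (auto simp: k0_def)
  have "Uu n t c (x XOR 2^i0) = (\<Sum>k\<in>{n-1..<n+t}. c k * of_bool (bit x (k - (n - 1))) + (if k = k0 then c k else 0))"
    unfolding Uu_def
  proof (rule sum.cong)
    fix k assume k: "k \<in> {n-1..<n+t}"
    have e: "(k - (n - 1) = i0) = (k = k0)" using k by (auto simp: k0_def)
    have bb: "bit (x XOR 2^i0) (k-(n-1)) = (bit x (k-(n-1)) \<noteq> (k = k0))"
      by (simp only: bit_xor_iff bit_exp_iff e) simp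
    show "c k * of_bool (bit (x XOR 2 ^ i0) (k - (n - 1))) = c k * of_bool (bit x (k - (n - 1))) + (if k = k0 then c k else 0)"
      by (simp only: bb of_bool_neq_bit distrib_left) simp
  qed simp
  also have "\<dots> = Uu n t c x + c k0"
    using k0 by (simp add: sum.distrib Uu_def)
  finally show ?thesis using assms by (simp add: k0_def)
qed

lemma divmod_xor:
  fixes p :: nat
  assumes "i < t+1"
  defines "q \<equiv> (p div 2^(t+1)) * 2^(t+1) + ((p mod 2^(t+1)) XOR 2^i)"
  shows "q div 2^(t+1) = p div 2^(t+1)" "q mod 2^(t+1) = (p mod 2^(t+1)) XOR 2^i"
proof -
  have lt: "(p mod 2^(t+1)) XOR 2^i < 2^(t+1)" by (rule xor_lt) (use assms in auto)
  show "q div 2^(t+1) = p div 2^(t+1)" using lt unfolding q_def by simp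
  show "q mod 2^(t+1) = (p mod 2^(t+1)) XOR 2^i" using lt unfolding q_def by simp
qed

lemma weight_case1:
  assumes "n \<ge> 4" "i0 < t+1" "d (n - 1 + i0) = 1"
  shows "2 * card {p. p < 2^(t+1)*n \<and> GG n t d p \<noteq> 0} = 2^(t+1)*n"
proof -
  define m :: nat where "m = 2^(t+1)"
  define N where "N = m*n"
  define \<phi> where "\<phi> p = (p div m) * m + ((p mod m) XOR 2^i0)" for p
  have m0: "m > 0" by (simp add: m_def)
  have phdiv: "\<phi> p div m = p div m" and phmod: "\<phi> p mod m = (p mod m) XOR 2^i0" for p
    using divmod_xor[OF assms(2), of p] by (simp_all add: \<phi>_def m_def)
  have phlt: "\<phi> p < N" if "p < N" for p
  proof -
    have "p div m < n" using that by (simp add: N_def less_mult_imp_div_less mult.commute)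
    then have "p div m * m + m \<le> N" by (metis N_def Suc_leI mult.commute mult_Suc_right mult_le_mono2 add.commute)
    moreover have "\<phi> p mod m < m" using m0 by simp
    moreover have "\<phi> p = p div m * m + \<phi> p mod m" by (metis phdiv div_mult_mod_eq)
    ultimately show ?thesis by linarith
  qed
  have phph: "\<phi> (\<phi> p) = p" for p
  proof -
    have x: "((p mod m) XOR 2^i0) XOR 2^i0 = p mod m" by (metis xor.assoc xor_self_eq xor.right_neutral)
    have "\<phi> (\<phi> p) = p div m * m + (((p mod m) XOR 2^i0) XOR 2^i0)" unfolding \<phi>_def[of "\<phi> p"] phdiv phmod by simp
    then show ?thesis unfolding x by simp
  qed
  have Gph: "GG n t d (\<phi> p) = GG n t d p + 1" if "p < N" for p
  proof -
    have pd: "p div m < n" using that by (simp add: N_def less_mult_imp_div_less mult.commute)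
    have "GG n t d (\<phi> p) = Aa n d (p div m) + Uu n t d ((p mod m) XOR 2^i0)"
      using GG_split[of "\<phi> p" t n d] pd phdiv phmod by (simp add: m_def)
    also have "\<dots> = Aa n d (p div m) + Uu n t d (p mod m) + 1"
      using Uu_flip[of i0 t d n "p mod m"] assms by (simp add: add.assoc)
    also have "\<dots> = GG n t d p + 1" using GG_split[of p t n d] pd by (simp add: m_def)
    finally show ?thesis .
  qed
  define W where "W = {p. p < N \<and> GG n t d p \<noteq> 0}"
  define W' where "W' = {p. p < N \<and> GG n t d p = 0}"
  have inj: "inj_on \<phi> A" for A by (metis inj_onI phph)
  have b1: "\<phi> ` W \<subseteq> W'" using Gph phlt by (auto simp: W_def W'_def)
  have b2: "\<phi> ` W' \<subseteq> W" using Gph phlt by (auto simp: W_def W'_def)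
  have fin: "finite W" "finite W'" by (auto simp: W_def W'_def)
  have "card W \<le> card W'" by (rule card_inj_on_le[OF inj b1 fin(2)])
  moreover have "card W' \<le> card W" by (rule card_inj_on_le[OF inj b2 fin(1)])
  moreover have "card W + card W' = N"
  proof -
    have "W \<union> W' = {..<N}" "W \<inter> W' = {}" by (auto simp: W_def W'_def)
    then show ?thesis using card_Un_disjoint[OF fin] by simp
  qed
  ultimately show ?thesis by (simp add: W_def N_def m_def)
qed

lemma weight_case2:
  assumes "n \<ge> 4" "\<forall>k\<in>{n-1..<n+t}. d k = 0" "p0 < 2^(t+1)*n" "GG n t d p0 \<noteq> 0"
  shows "card {p. p < 2^(t+1)*n \<and> GG n t d p \<noteq> 0} \<ge> 2 * 2^(t+1)"
proof -
  define m :: nat where "m = 2^(t+1)"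
  define N where "N = m*n"
  have m0: "m > 0" by (simp add: m_def)
  have U0: "Uu n t d x = 0" for x unfolding Uu_def using assms(2) by simp
  have pd: "p div m < n" if "p < N" for p using that by (simp add: N_def less_mult_imp_div_less mult.commute)
  have GA: "GG n t d p = Aa n d (p div m)" if "p < N" for p
    using GG_split[of p t n d] pd[OF that] U0 by (simp add: m_def)
  define j0 where "j0 = p0 div m"
  have j0: "j0 < n" "Aa n d j0 \<noteq> 0" using assms(3,4) GA pd by (auto simp: j0_def N_def m_def mult.commute)
  obtain j1 where j1: "j1 < n" "j1 \<noteq> j0" "Aa n d j1 \<noteq> 0"
  proof (rule ccontr)
    assume "\<not> thesis"
    then have z: "\<forall>j<n. j \<noteq> j0 \<longrightarrow> Aa n d j = 0" using that by blast
    have "(\<Sum>j<n. Aa n d j) = (\<Sum>j<n. if j = j0 then Aa n d j else 0)"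
      by (rule sum.cong) (use z in auto)
    also have "\<dots> = Aa n d j0" using j0 by simp
    finally show False using Aa_sum[of n d] j0 assms(1) by simp
  qed
  define B where "B j = (\<lambda>r. j*m + r) ` {..<m}" for j
  have Bdiv: "q div m = j" if "q \<in> B j" for q j using that m0 by (auto simp: B_def)
  have Bcard: "card (B j) = m" for j by (simp add: B_def card_image)
  have Bsub: "B j \<subseteq> {p. p < N \<and> GG n t d p \<noteq> 0}" if "j < n" "Aa n d j \<noteq> 0" for j
  proof
    fix q assume q: "q \<in> B j"
    then obtain r where r: "r < m" "q = j*m + r" by (auto simp: B_def)
    have "j*m + m \<le> N" using that(1) by (metis N_def Suc_leI mult.commute mult_Suc_right mult_le_mono2 add.commute)
    then have "q < N" using r by simp
    then show "q \<in> {p. p < N \<and> GG n t d p \<noteq> 0}" using GA Bdiv[OF q] that by simp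
  qed
  have disj: "B j0 \<inter> B j1 = {}" using Bdiv j1 by blast
  have "card (B j0 \<union> B j1) = 2*m" using card_Un_disjoint[OF _ _ disj] Bcard by (simp add: B_def)
  moreover have "card (B j0 \<union> B j1) \<le> card {p. p < N \<and> GG n t d p \<noteq> 0}"
    by (rule card_mono) (use Bsub j0 j1 in auto)
  ultimately show ?thesis by (simp add: N_def m_def mult.commute)
qed

lemma weight_bound:
  assumes "n \<ge> 4" "even n" "p0 < 2^(t+1)*n" "GG n t d p0 \<noteq> 0"
  shows "card {p. p < 2^(t+1)*n \<and> GG n t d p \<noteq> 0} \<ge> 2 * 2^(t+1)"
proof (cases "\<forall>k\<in>{n-1..<n+t}. d k = 0")
  case True
  then show ?thesis using weight_case2[OF assms(1) True assms(3,4)] by simp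
next
  case False
  then obtain k where k: "k \<in> {n-1..<n+t}" "d k \<noteq> 0" by blast
  define i0 where "i0 = k - (n - 1)"
  have "i0 < t+1" "d (n - 1 + i0) = 1" using k assms(1) by (auto simp: i0_def)
  from weight_case1[of n i0 t d] assms(1) this
  have "2 * card {p. p < 2^(t+1)*n \<and> GG n t d p \<noteq> 0} = 2^(t+1)*n" by blast
  moreover have "2^(t+1)*n \<ge> 2^(t+1)*4" using assms(1) by simp
  ultimately show ?thesis by simp
qed

lemma sum_blocks:
  fixes g :: "nat \<Rightarrow> 'a::comm_monoid_add"
  shows "(\<Sum>p<n*m. g p) = (\<Sum>j<n. \<Sum>x<m. g (j*m + x))"
proof -
  have "(\<Sum>p<n*m. g p) = (\<Sum>j<n. \<Sum>p\<in>{j*m..<j*m+m}. g p)" by (rule sum.nat_group[symmetric])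
  also have "\<dots> = (\<Sum>j<n. \<Sum>x<m. g (j*m + x))"
  proof (rule sum.cong[OF refl])
    fix j
    have "{j*m..<j*m+m} = (\<lambda>x. j*m + x) ` {..<m}"
    proof (auto simp: image_iff)
      fix x assume "j*m \<le> x" "x < j*m + m"
      then show "\<exists>xa\<in>{..<m}. x = j * m + xa" by (intro bexI[of _ "x - j*m"]) auto
    qed
    then show "(\<Sum>p\<in>{j*m..<j*m+m}. g p) = (\<Sum>x<m. g (j*m + x))"
      by (simp add: sum.reindex)
  qed
  finally show ?thesis .
qed

lemma orth:
  assumes "n \<ge> 1" "even n"
  shows "(\<Sum>p<2^(t+1)*n. GG n t c p * GG n t c' p) = 0"
proof -
  define m :: nat where "m = 2^(t+1)"
  have m0: "m > 0" by (simp add: m_def)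
  define A where "A = Aa n c"
  define B where "B = Aa n c'"
  define U where "U = Uu n t c"
  define V where "V = Uu n t c'"
  have mz: "(of_nat m :: bit) = 0" by (simp add: of_nat_bit m_def)
  have nz: "(of_nat n :: bit) = 0" using assms by (simp add: of_nat_bit)
  have "(\<Sum>p<2^(t+1)*n. GG n t c p * GG n t c' p) = (\<Sum>p<n*m. GG n t c p * GG n t c' p)"
    by (simp add: m_def mult.commute)
  also have "\<dots> = (\<Sum>j<n. \<Sum>x<m. GG n t c (j*m+x) * GG n t c' (j*m+x))" by (rule sum_blocks)
  also have "\<dots> = (\<Sum>j<n. \<Sum>x<m. (A j + U x) * (B j + V x))"
  proof (intro sum.cong refl)
    fix j x assume "j \<in> {..<n}" "x \<in> {..<m}"
    then have d: "(j*m+x) div 2^(t+1) = j" "(j*m+x) mod 2^(t+1) = x" by (auto simp: m_def)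
    show "GG n t c (j*m+x) * GG n t c' (j*m+x) = (A j + U x) * (B j + V x)"
      using GG_split[of "j*m+x" t n c] GG_split[of "j*m+x" t n c'] d \<open>j \<in> {..<n}\<close>
      by (simp add: A_def B_def U_def V_def)
  qed
  also have "\<dots> = (\<Sum>j<n. of_nat m * (A j * B j) + A j * (\<Sum>x<m. V x) + B j * (\<Sum>x<m. U x) + (\<Sum>x<m. U x * V x))"
  proof (rule sum.cong[OF refl])
    fix j
    have "(\<Sum>x<m. (A j + U x) * (B j + V x)) = (\<Sum>x<m. A j * B j + A j * V x + B j * U x + U x * V x)"
      by (rule sum.cong) (auto simp: algebra_simps)
    also have "\<dots> = of_nat m * (A j * B j) + A j * (\<Sum>x<m. V x) + B j * (\<Sum>x<m. U x) + (\<Sum>x<m. U x * V x)"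
      by (simp add: sum.distrib sum_distrib_left)
    finally show "(\<Sum>x<m. (A j + U x) * (B j + V x)) = of_nat m * (A j * B j) + A j * (\<Sum>x<m. V x) + B j * (\<Sum>x<m. U x) + (\<Sum>x<m. U x * V x)" .
  qed
  also have "\<dots> = (\<Sum>j<n. A j) * (\<Sum>x<m. V x) + (\<Sum>j<n. B j) * (\<Sum>x<m. U x) + of_nat n * (\<Sum>x<m. U x * V x)"
    by (simp add: mz sum.distrib sum_distrib_right)
  also have "\<dots> = 0" using Aa_sum[OF assms(1)] nz by (simp add: A_def B_def)
  finally show ?thesis .
qed

lemma bit_neq_iff: "((a::bit) \<noteq> b) = (a + b = 1)"
  by (cases a; cases b) auto

lemma bit_add_eq0: "((a::bit) + b = 0) = (a = b)"
  by (cases a; cases b) auto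

lemma bit_sq: "(a::bit) * a = of_bool (a \<noteq> 0)"
  by (cases a) auto

theorem theorem12:
  fixes t n :: nat
  assumes "even n" and "n \<ge> 4"
  shows "\<exists>C. binary_linear_code (2 ^ (t + 1) * n) (n + t) C \<and>
             min_distance C = 2 ^ (t + 2) \<and>
             even_like C \<and>
             euclid_self_orthogonal (2 ^ (t + 1) * n) C"
proof -
  define m :: nat where "m = 2^(t+1)"
  define N where "N = 2 ^ (t + 1) * n"
  have m0: "m > 0" by (simp add: m_def)
  have Nm: "N = m * n" by (simp add: N_def m_def)
  define vs where "vs = map (\<lambda>k. map (gen n t k) [0..<N]) [0..<n+t]"
  define w where "w c = map (GG n t c) [0..<N]" for c
  have lvs: "length vs = n + t" by (simp add: vs_def)
  have svs: "set vs \<subseteq> words N" by (auto simp: vs_def words_def)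
  have lc: "lincomb N c vs = w c" for c
  proof -
    have "lincomb N c vs = map (\<lambda>p. \<Sum>k<length vs. c k * vs!k!p) [0..<N]"
      by (rule lincomb_eq) (auto simp: vs_def)
    also have "\<dots> = w c" unfolding w_def GG_def lvs
      by (intro map_cong refl sum.cong) (auto simp: vs_def)
    finally show ?thesis .
  qed
  define C where "C = {lincomb N c vs | c. True}"
  have C: "C = {w c | c. True}" unfolding C_def lc ..
  have pd: "p div m < n" if "p < N" for p using that by (simp add: Nm less_mult_imp_div_less mult.commute)
  have li: "lin_indep N vs"
    unfolding lin_indep_def
  proof (rule allI, rule impI)
    fix c assume "lincomb N c vs = zero_word N"
    then have z: "GG n t c p = 0" if "p < N" for p
      using that by (auto simp: lc w_def zero_word_def dest!: arg_cong[where f="\<lambda>l. l ! p"])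
    have za: "c i = 0" if "i < n - 1" for i
    proof -
      have "i * m < N" using that assms(2) m0 by (simp add: Nm)
      then have "GG n t c (i*m) = 0" by (rule z)
      moreover have "GG n t c (i*m) = Aa n c i + Uu n t c 0"
        using GG_split[of "i*m" t n c] that m0 by (simp add: m_def)
      ultimately show ?thesis using that by (simp add: Aa_def Uu_def)
    qed
    show "\<forall>i<length vs. c i = 0"
    proof (intro allI impI)
      fix i assume i: "i < length vs"
      show "c i = 0"
      proof (cases "i < n - 1")
        case True then show ?thesis by (rule za)
      next
        case False
        define i0 where "i0 = i - (n - 1)"
        have i0: "i0 < t + 1" using False i lvs by (simp add: i0_def)
        have lt: "(2::nat)^i0 < m" unfolding m_def using i0 by (intro power_strict_increasing) auto
        have "m \<le> N" using assms(2) by (simp add: Nm)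
        then have "2^i0 < N" using lt by linarith
        then have "GG n t c (2^i0) = 0" by (rule z)
        moreover have "GG n t c (2^i0) = Aa n c 0 + Uu n t c (2^i0)"
          using GG_split[of "2^i0" t n c] lt assms(2) by (simp add: m_def)
        moreover have "Aa n c 0 = 0" using za[of 0] assms(2) by (simp add: Aa_def)
        moreover have "Uu n t c (2^i0) = (\<Sum>k\<in>{n-1..<n+t}. if k = i then c k else 0)"
          unfolding Uu_def using False by (intro sum.cong refl) (auto simp: bit_exp_iff i0_def)
        moreover have "i \<in> {n-1..<n+t}" using False i lvs by simp
        ultimately show ?thesis by simp
      qed
    qed
  qed
  have blc: "binary_linear_code N (n + t) C"
    unfolding binary_linear_code_def using lvs svs li C_def by blast
  have hd: "hamming_dist (w c) (w c') = card {p. p < N \<and> GG n t (\<lambda>k. c k + c' k) p \<noteq> 0}" for c c'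
    unfolding hamming_dist_def w_def GG_add
    by (intro arg_cong[where f=card]) (auto simp: bit_neq_iff)
  have neq: "\<exists>p<N. GG n t (\<lambda>k. c k + c' k) p \<noteq> 0" if "w c \<noteq> w c'" for c c'
  proof (rule ccontr)
    assume "\<not> ?thesis"
    then have "\<forall>p<N. GG n t c p = GG n t c' p" by (simp add: GG_add bit_add_eq0)
    then have "w c = w c'" by (simp add: w_def)
    then show False using that by simp
  qed
  define D where "D = {hamming_dist x y | x y. x \<in> C \<and> y \<in> C \<and> x \<noteq> y}"
  have Dlow: "d \<ge> 2*m" if dD: "d \<in> D" for d
  proof -
    obtain c c' where cc: "d = hamming_dist (w c) (w c')" "w c \<noteq> w c'" using dD by (auto simp: D_def C)
    obtain p where "p < N" "GG n t (\<lambda>k. c k + c' k) p \<noteq> 0" using neq[OF cc(2)] by blast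
    from weight_bound[OF assms(2,1), of p t] this show ?thesis
      unfolding cc hd by (simp add: N_def m_def)
  qed
  have Dfin: "finite D"
  proof (rule finite_subset)
    show "D \<subseteq> {..N}"
    proof
      fix d assume "d \<in> D"
      then obtain c c' where "d = hamming_dist (w c) (w c')" by (auto simp: D_def C)
      moreover have "card {p. p < N \<and> GG n t (\<lambda>k. c k + c' k) p \<noteq> 0} \<le> card {..<N}"
        by (rule card_mono) auto
      ultimately have "d \<le> card {..<N}" unfolding hd by simp
      then show "d \<in> {..N}" by simp
    qed
  qed simp
  define c0 :: "nat \<Rightarrow> bit" where "c0 k = of_bool (k = 0)" for k
  have Dmem: "2*m \<in> D"
  proof -
    have e: "(\<lambda>k. c0 k + 0) = c0" by simp
    have U0: "Uu n t c0 x = 0" for x unfolding Uu_def c0_def using assms(2) by (intro sum.neutral) auto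
    have s1: "(\<Sum>k<n-1. c0 k) = 1" using assms(2) by (simp add: c0_def)
    have Gne: "GG n t c0 p \<noteq> 0 \<longleftrightarrow> p div m = 0 \<or> p div m = n - 1" if "p < N" for p
      using GG_split[of p t n c0] pd[OF that] U0 s1 by (auto simp: m_def Aa_def c0_def)
    have W: "{p. p < N \<and> GG n t c0 p \<noteq> 0} \<subseteq> {..<m} \<union> {(n-1)*m..<(n-1)*m+m}"
    proof
      fix p assume "p \<in> {p. p < N \<and> GG n t c0 p \<noteq> 0}"
      then have dj: "p div m = 0 \<or> p div m = n - 1" using Gne by auto
      have a: "p div m * m \<le> p" "p < p div m * m + m"
        using m0 div_mult_mod_eq[of p m] mod_less_divisor[OF m0, of p] by linarith+
      from dj show "p \<in> {..<m} \<union> {(n-1)*m..<(n-1)*m+m}"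
      proof
        assume "p div m = 0" then show ?thesis using a by simp
      next
        assume "p div m = n - 1" then show ?thesis using a by simp
      qed
    qed
    have "card {p. p < N \<and> GG n t c0 p \<noteq> 0} \<le> card ({..<m} \<union> {(n-1)*m..<(n-1)*m+m})"
      by (rule card_mono[OF _ W]) simp
    also have "\<dots> \<le> m + m" using card_Un_le[of "{..<m}" "{(n-1)*m..<(n-1)*m+m}"] by simp
    finally have up: "card {p. p < N \<and> GG n t c0 p \<noteq> 0} \<le> 2*m" by simp
    have "0 < N" using assms(2) by (simp add: N_def)
    moreover have "GG n t c0 0 \<noteq> 0" using Gne[OF \<open>0 < N\<close>] by simp
    ultimately have "card {p. p < N \<and> GG n t c0 p \<noteq> 0} \<ge> 2*m"
      using weight_bound[OF assms(2,1), of 0 t c0] by (simp add: N_def m_def)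
    with up have "hamming_dist (w c0) (w (\<lambda>_. 0)) = 2*m" unfolding hd e by simp
    moreover have "w c0 \<noteq> w (\<lambda>_. 0)"
    proof
      assume "w c0 = w (\<lambda>_. 0)"
      then have "w c0 ! 0 = w (\<lambda>_. 0) ! 0" by simp
      then show False using \<open>0 < N\<close> \<open>GG n t c0 0 \<noteq> 0\<close> by (simp add: w_def GG_def)
    qed
    ultimately show ?thesis unfolding D_def C
      by (smt (verit, best) mem_Collect_eq)
  qed
  have md: "min_distance C = 2 ^ (t + 2)"
  proof -
    have "min_distance C = Min D" by (simp add: min_distance_def D_def)
    also have "\<dots> = 2*m" by (rule Min_eqI[OF Dfin]) (use Dlow Dmem in auto)
    finally show ?thesis by (simp add: m_def)
  qed
  have inner: "euclid_inner (w c) (w c') = 0" for c c'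
    using orth[of n t c c'] assms by (simp add: euclid_inner_def w_def N_def)
  have so: "euclid_self_orthogonal N C"
    unfolding euclid_self_orthogonal_def euclid_dual_def
    by (auto simp: C words_def w_def[symmetric] inner) (simp add: w_def)
  have ev: "even_like C"
    unfolding even_like_def
  proof
    fix x assume "x \<in> C"
    then obtain c where x: "x = w c" by (auto simp: C)
    have "(0::bit) = (\<Sum>p<N. GG n t c p * GG n t c p)"
      using inner[of c c] by (simp add: euclid_inner_def w_def)
    also have "\<dots> = of_nat (card {p. p < N \<and> GG n t c p \<noteq> 0})"
      by (simp add: bit_sq Int_def)
    finally have "even (card {p. p < N \<and> GG n t c p \<noteq> 0})"
      by (simp add: of_nat_bit split: if_splits)
    moreover have "{i. i < length x \<and> x ! i \<noteq> 0} = {p. p < N \<and> GG n t c p \<noteq> 0}"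
      by (auto simp: x w_def)
    ultimately show "even (hamming_weight x)" by (simp only: hamming_weight_def)
  qed
  show ?thesis using blc md ev so unfolding N_def C_def by blast
qed

end
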